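(* Let $\Lambda$ be a left cancellative small category which is (isomorphic to) a subcategory of a groupoid. Then the groupoid $G_2(\Lambda)$ is Hausdorff.
   Context: A left cancellative small category (LCSC) is a small category $\Lambda$ such that $\alpha\beta=\alpha\gamma$ implies $\beta=\gamma$. Composition $\alpha\beta$ is defined when $s(\alpha)=r(\beta)$; $\Lambda^0$ is the set of objects (identity morphisms); $v\Lambda=\{\alpha:r(\alpha)=v\}$; $\alpha\Lambda=\{\alpha\beta:r(\beta)=s(\alpha)\}$. For $\alpha\in\Lambda$, $\tau^\alpha(\beta)=\alpha\beta$ on $s(\alpha)\Lambda$ and $\sigma^\alpha:\alpha\Lambda\to s(\alpha)\Lambda$ is its inverse. A zigzag is a tuple $\zeta=(\alpha_1,\beta_1,\dots,\alpha_n,\beta_n)$ with $r(\alpha_i)=r(\beta_i)$ and $s(\alpha_{i+1})=s(\beta_i)$; $\mathcal Z$ is the set of zigzags, $s(\zeta)=s(\beta_n)$, $r(\zeta)=s(\alpha_1)$, $\mathcal Zv=\{\zeta:s(\zeta)=v\}$, $\overline\zeta=(\beta_n,\alpha_n,\dots,\beta_1,\alpha_1)$, composable zigzags concatenate as tuples. The zigzag map $\varphi_\zeta=\sigma^{\alpha_1}\circ\tau^{\beta_1}\circ\cdots\circ\sigma^{\alpha_n}\circ\tau^{\beta_n}$ (partial injective map) has domain $A(\zeta)\subseteq s(\zeta)\Lambda$ and range $A(\overline\zeta)$. $\mathcal D^{(0)}_v$ is the set of nonempty $A(\zeta)$, $\zeta\in\mathcal Zv$; $\mathcal A_v$ is the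 ring of subsets of $v\Lambda$ generated by $\mathcal D^{(0)}_v$. $X_v$ is the set of ultrafilters of $\mathcal A_v$ ($\mathcal U_x$ denoting the ultrafilter $x$), with compact open basic sets $\widehat E=\{x:E\in\mathcal U_x\}$, $E\in\mathcal A_v$; $X=\bigsqcup_vX_v$, $r(x)=v$ for $x\in X_v$. For $x\in\widehat{A(\zeta)}$, $\Phi_\zeta(x)$ is the ultrafilter of $\mathcal A_{r(\zeta)}$ generated by $\{\varphi_\zeta(E\cap A(\zeta)):E\in\mathcal U_x\}$. On $\mathcal Z*X=\{(\zeta,x):s(\zeta)=r(x),\ x\in\widehat{A(\zeta)}\}$, $(\zeta,x)\sim_2(\zeta',x')$ iff $x=x'$ and $\varphi_\zeta|_E=\varphi_{\zeta'}|_E$ for some $E\in\mathcal U_x$. $G_2(\Lambda)=(\mathcal Z*X)/\sim_2$, with classes $[\zeta,x]$, product $[\zeta,\Phi_{\zeta'}(x)][\zeta',x]=[\zeta\zeta',x]$, inverse $[\zeta,x]^{-1}=[\overline\zeta,\Phi_\zeta(x)]$, and topology generated by the basis $[\zeta,E]=\{[\zeta,x]:x\in\widehat E\}$, $E\in\mathcal A_{s(\zeta)}$, $E\subseteq A(\zeta)$; it is an ample étale groupoid. *)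

theory Defs
  imports "HOL-Analysis.Analysis"
begin

text \<open>A small category, given by its set of morphisms (objects are identified
with identity morphisms), source, range and composition.
cmp a b denotes the composite a b, defined when src a = rng b.\<close>

record 'a cat =
  Mor :: "'a set"
  src :: "'a \<Rightarrow> 'a"
  rng :: "'a \<Rightarrow> 'a"
  cmp :: "'a \<Rightarrow> 'a \<Rightarrow> 'a"

definition objs :: "('a, 'm) cat_scheme \<Rightarrow> 'a set" where
  "objs C = src C ` Mor C"

definition is_category :: "('a, 'm) cat_scheme \<Rightarrow> bool" where
  "is_category C \<longleftrightarrow>
     (\<forall>a\<in>Mor C. src C a \<in> Mor C \<and> rng C a \<in> Mor C) \<and>
     (\<forall>a\<in>Mor C. src C (src C a) = src C a \<and> rng C (src C a) = src C a
                 \<and> src C (rng C a) = rng C a \<and> rng C (rng C a) = rng C a) \<and>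
     (\<forall>a\<in>Mor C. \<forall>b\<in>Mor C. src C a = rng C b \<longrightarrow>
         cmp C a b \<in> Mor C \<and> src C (cmp C a b) = src C b \<and> rng C (cmp C a b) = rng C a) \<and>
     (\<forall>a\<in>Mor C. \<forall>b\<in>Mor C. \<forall>d\<in>Mor C. src C a = rng C b \<longrightarrow> src C b = rng C d \<longrightarrow>
         cmp C (cmp C a b) d = cmp C a (cmp C b d)) \<and>
     (\<forall>a\<in>Mor C. cmp C (rng C a) a = a \<and> cmp C a (src C a) = a)"

definition left_cancellative :: "('a, 'm) cat_scheme \<Rightarrow> bool" where
  "left_cancellative C \<longleftrightarrow>
     (\<forall>a\<in>Mor C. \<forall>b\<in>Mor C. \<forall>d\<in>Mor C.
        src C a = rng C b \<longrightarrow> src C a = rng C d \<longrightarrow> cmp C a b = cmp C a d \<longrightarrow> b = d)"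

definition is_LCSC :: "('a, 'm) cat_scheme \<Rightarrow> bool" where
  "is_LCSC C \<longleftrightarrow> is_category C \<and> left_cancellative C"

definition is_groupoid :: "('b, 'm) cat_scheme \<Rightarrow> bool" where
  "is_groupoid G \<longleftrightarrow> is_category G \<and>
     (\<forall>g\<in>Mor G. \<exists>h\<in>Mor G. src G h = rng G g \<and> rng G h = src G g \<and>
        cmp G g h = rng G g \<and> cmp G h g = src G g)"

text \<open>An injective functor; its image is a subcategory isomorphic to the source.\<close>
definition injective_functor :: "('a, 'm) cat_scheme \<Rightarrow> ('b, 'n) cat_scheme \<Rightarrow> ('a \<Rightarrow> 'b) \<Rightarrow> bool" where
  "injective_functor C D F \<longleftrightarrow>
     F ` Mor C \<subseteq> Mor D \<and> inj_on F (Mor C) \<and>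
     (\<forall>a\<in>Mor C. src D (F a) = F (src C a) \<and> rng D (F a) = F (rng C a)) \<and>
     (\<forall>a\<in>Mor C. \<forall>b\<in>Mor C. src C a = rng C b \<longrightarrow> F (cmp C a b) = cmp D (F a) (F b))"

text \<open>A zigzag (a1,b1,...,an,bn), n \<ge> 1, is the list [(a1,b1),...,(an,bn)].\<close>

definition vMor :: "('a, 'm) cat_scheme \<Rightarrow> 'a \<Rightarrow> 'a set" where
  "vMor C v = {a \<in> Mor C. rng C a = v}"

fun zz_links :: "('a, 'm) cat_scheme \<Rightarrow> ('a \<times> 'a) list \<Rightarrow> bool" where
  "zz_links C [] = True"
| "zz_links C [p] = True"
| "zz_links C (p # q # rest) = (src C (fst q) = src C (snd p) \<and> zz_links C (q # rest))"

definition is_zigzag :: "('a, 'm) cat_scheme \<Rightarrow> ('a \<times> 'a) list \<Rightarrow> bool" where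
  "is_zigzag C z \<longleftrightarrow> z \<noteq> [] \<and>
     (\<forall>(a, b)\<in>set z. a \<in> Mor C \<and> b \<in> Mor C \<and> rng C a = rng C b) \<and> zz_links C z"

definition zz_s :: "('a, 'm) cat_scheme \<Rightarrow> ('a \<times> 'a) list \<Rightarrow> 'a" where
  "zz_s C z = src C (snd (last z))"

definition zz_r :: "('a, 'm) cat_scheme \<Rightarrow> ('a \<times> 'a) list \<Rightarrow> 'a" where
  "zz_r C z = src C (fst (hd z))"

definition zz_step :: "('a, 'm) cat_scheme \<Rightarrow> 'a \<Rightarrow> 'a \<Rightarrow> 'a \<Rightarrow> 'a option" where
  "zz_step C a b y =
     (if \<exists>d\<in>Mor C. rng C d = src C a \<and> cmp C a d = cmp C b y
      then Some (THE d. d \<in> Mor C \<and> rng C d = src C a \<and> cmp C a d = cmp C b y)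
      else None)"

fun zz_fold :: "('a, 'm) cat_scheme \<Rightarrow> ('a \<times> 'a) list \<Rightarrow> 'a \<Rightarrow> 'a option" where
  "zz_fold C [] x = Some x"
| "zz_fold C ((a, b) # rest) x =
     (case zz_fold C rest x of None \<Rightarrow> None | Some y \<Rightarrow> zz_step C a b y)"

definition zz_map :: "('a, 'm) cat_scheme \<Rightarrow> ('a \<times> 'a) list \<Rightarrow> 'a \<Rightarrow> 'a option" where
  "zz_map C z x = (if x \<in> vMor C (zz_s C z) then zz_fold C z x else None)"

definition zz_dom :: "('a, 'm) cat_scheme \<Rightarrow> ('a \<times> 'a) list \<Rightarrow> 'a set" where
  "zz_dom C z = {x. zz_map C z x \<noteq> None}"

definition D0 :: "('a, 'm) cat_scheme \<Rightarrow> 'a \<Rightarrow> 'a set set" where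
  "D0 C v = {zz_dom C z | z. is_zigzag C z \<and> zz_s C z = v \<and> zz_dom C z \<noteq> {}}"

definition gen_ring :: "'a set set \<Rightarrow> 'a set set" where
  "gen_ring D = \<Inter>{M. D \<subseteq> M \<and> {} \<in> M \<and> (\<forall>E\<in>M. \<forall>F\<in>M. E \<union> F \<in> M \<and> E - F \<in> M)}"

definition Av :: "('a, 'm) cat_scheme \<Rightarrow> 'a \<Rightarrow> 'a set set" where
  "Av C v = gen_ring (D0 C v)"

definition is_filter_of :: "'a set set \<Rightarrow> 'a set set \<Rightarrow> bool" where
  "is_filter_of R U \<longleftrightarrow> U \<subseteq> R \<and> U \<noteq> {} \<and> {} \<notin> U \<and>
     (\<forall>E\<in>U. \<forall>F\<in>R. E \<subseteq> F \<longrightarrow> F \<in> U) \<and> (\<forall>E\<in>U. \<forall>F\<in>U. E \<inter> F \<in> U)"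

definition is_ultrafilter_of :: "'a set set \<Rightarrow> 'a set set \<Rightarrow> bool" where
  "is_ultrafilter_of R U \<longleftrightarrow> is_filter_of R U \<and>
     (\<forall>U'. is_filter_of R U' \<and> U \<subseteq> U' \<longrightarrow> U' = U)"

text \<open>Points of X are pairs (v, U) with v an object and U an ultrafilter of A_v,
so that X is the disjoint union of the X_v and r(v, U) = v.\<close>
definition Xsp :: "('a, 'm) cat_scheme \<Rightarrow> ('a \<times> 'a set set) set" where
  "Xsp C = {(v, U). v \<in> objs C \<and> is_ultrafilter_of (Av C v) U}"

definition hat :: "('a, 'm) cat_scheme \<Rightarrow> 'a \<Rightarrow> 'a set \<Rightarrow> ('a \<times> 'a set set) set" where
  "hat C v E = {x \<in> Xsp C. fst x = v \<and> E \<in> snd x}"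

definition ZX :: "('a, 'm) cat_scheme \<Rightarrow> (('a \<times> 'a) list \<times> ('a \<times> 'a set set)) set" where
  "ZX C = {(z, x). is_zigzag C z \<and> x \<in> Xsp C \<and> fst x = zz_s C z \<and> zz_dom C z \<in> snd x}"

definition sim2 :: "('a, 'm) cat_scheme \<Rightarrow> ((('a \<times> 'a) list \<times> ('a \<times> 'a set set)) \<times>
                                                (('a \<times> 'a) list \<times> ('a \<times> 'a set set))) set" where
  "sim2 C = {((z, x), (z', x')). (z, x) \<in> ZX C \<and> (z', x') \<in> ZX C \<and> x = x' \<and>
               (\<exists>E\<in>snd x. \<forall>y\<in>E. zz_map C z y = zz_map C z' y)}"

definition G2 :: "('a, 'm) cat_scheme \<Rightarrow> (('a \<times> 'a) list \<times> ('a \<times> 'a set set)) set set" where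
  "G2 C = ZX C // sim2 C"

definition G2_class :: "('a, 'm) cat_scheme \<Rightarrow> ('a \<times> 'a) list \<Rightarrow> ('a \<times> 'a set set)
                          \<Rightarrow> (('a \<times> 'a) list \<times> ('a \<times> 'a set set)) set" where
  "G2_class C z x = sim2 C `` {(z, x)}"

definition G2_basic :: "('a, 'm) cat_scheme \<Rightarrow> ('a \<times> 'a) list \<Rightarrow> 'a set
                          \<Rightarrow> (('a \<times> 'a) list \<times> ('a \<times> 'a set set)) set set" where
  "G2_basic C z E = {G2_class C z x | x. x \<in> hat C (zz_s C z) E}"

definition G2_basis :: "('a, 'm) cat_scheme \<Rightarrow> (('a \<times> 'a) list \<times> ('a \<times> 'a set set)) set set set" where
  "G2_basis C = {G2_basic C z E | z E. is_zigzag C z \<and> E \<in> Av C (zz_s C z) \<and> E \<subseteq> zz_dom C z}"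

definition G2_topology :: "('a, 'm) cat_scheme \<Rightarrow> (('a \<times> 'a) list \<times> ('a \<times> 'a set set)) set topology" where
  "G2_topology C = topology_generated_by (G2_basis C)"

end

theory Submission
  imports Defs
begin

section \<open>Category facts\<close>

lemma catD:
  assumes "is_category C"
  shows cat_src_mor: "a \<in> Mor C \<Longrightarrow> src C a \<in> Mor C"
    and cat_rng_mor: "a \<in> Mor C \<Longrightarrow> rng C a \<in> Mor C"
    and cat_src_src: "a \<in> Mor C \<Longrightarrow> src C (src C a) = src C a"
    and cat_rng_src: "a \<in> Mor C \<Longrightarrow> rng C (src C a) = src C a"
    and cat_src_rng: "a \<in> Mor C \<Longrightarrow> src C (rng C a) = rng C a"
    and cat_rng_rng: "a \<in> Mor C \<Longrightarrow> rng C (rng C a) = rng C a"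
    and cat_cmp_mor: "a \<in> Mor C \<Longrightarrow> b \<in> Mor C \<Longrightarrow> src C a = rng C b \<Longrightarrow> cmp C a b \<in> Mor C"
    and cat_src_cmp: "a \<in> Mor C \<Longrightarrow> b \<in> Mor C \<Longrightarrow> src C a = rng C b \<Longrightarrow> src C (cmp C a b) = src C b"
    and cat_rng_cmp: "a \<in> Mor C \<Longrightarrow> b \<in> Mor C \<Longrightarrow> src C a = rng C b \<Longrightarrow> rng C (cmp C a b) = rng C a"
    and cat_assoc: "a \<in> Mor C \<Longrightarrow> b \<in> Mor C \<Longrightarrow> d \<in> Mor C \<Longrightarrow> src C a = rng C b \<Longrightarrow> src C b = rng C d \<Longrightarrow>
         cmp C (cmp C a b) d = cmp C a (cmp C b d)"
    and cat_lid: "a \<in> Mor C \<Longrightarrow> cmp C (rng C a) a = a"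
    and cat_rid: "a \<in> Mor C \<Longrightarrow> cmp C a (src C a) = a"
  using assms unfolding is_category_def by blast+

lemma grp_inv:
  assumes "is_groupoid G" "g \<in> Mor G"
  obtains h where "h \<in> Mor G" "src G h = rng G g" "rng G h = src G g"
    "cmp G g h = rng G g" "cmp G h g = src G g"
  using assms unfolding is_groupoid_def by blast

lemma grp_rcancel:
  assumes G: "is_groupoid G" and m: "g \<in> Mor G" "g' \<in> Mor G" "u \<in> Mor G"
    and s: "src G g = rng G u" "src G g' = rng G u" and e: "cmp G g u = cmp G g' u"
  shows "g = g'"
proof -
  have C: "is_category G" using G unfolding is_groupoid_def by blast
  obtain w where w: "w \<in> Mor G" "src G w = rng G u" "rng G w = src G u"
    "cmp G u w = rng G u" "cmp G w u = src G u" using grp_inv[OF G m(3)] by blast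
  have "g = cmp G g (cmp G u w)" using s w cat_rid[OF C m(1)] by simp
  also have "\<dots> = cmp G (cmp G g u) w" using cat_assoc[OF C m(1) m(3) w(1)] s w by simp
  also have "\<dots> = cmp G (cmp G g' u) w" using e by simp
  also have "\<dots> = cmp G g' (cmp G u w)" using cat_assoc[OF C m(2) m(3) w(1)] s w by simp
  also have "\<dots> = g'" using s w cat_rid[OF C m(2)] by simp
  finally show ?thesis .
qed

lemma step_lemma:
  assumes L: "is_LCSC L" and m: "a \<in> Mor L" "b \<in> Mor L" "y \<in> Mor L"
    and r: "rng L a = rng L b" "src L b = rng L y"
    and st: "zz_step L a b y = Some d"
  shows "d \<in> Mor L \<and> rng L d = src L a \<and> cmp L a d = cmp L b y"
proof -
  have ex: "\<exists>d\<in>Mor L. rng L d = src L a \<and> cmp L a d = cmp L b y"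
    using st unfolding zz_step_def by (auto split: if_splits)
  have uniq: "\<exists>!d. d \<in> Mor L \<and> rng L d = src L a \<and> cmp L a d = cmp L b y"
    using ex L unfolding is_LCSC_def left_cancellative_def
    by (metis (no_types, lifting) m(1))
  have "d = (THE d. d \<in> Mor L \<and> rng L d = src L a \<and> cmp L a d = cmp L b y)"
    using st ex unfolding zz_step_def by (auto split: if_splits)
  then show ?thesis using theI'[OF uniq] by simp
qed

lemma links_cons:
  "zz_links C (p # rest) \<Longrightarrow> zz_links C rest \<and> (rest \<noteq> [] \<longrightarrow> src C (fst (hd rest)) = src C (snd p))"
  by (cases rest) auto

lemma zz_fold_grp:
  assumes L: "is_LCSC L" and G: "is_groupoid G" and Fi: "injective_functor L G F"
  shows "v \<in> Mor L \<Longrightarrow> src L v = v \<Longrightarrow> (\<forall>(a,b)\<in>set z. a\<in>Mor L \<and> b \<in> Mor L \<and> rng L a = rng L b)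
    \<Longrightarrow> zz_links L z \<Longrightarrow> (z \<noteq> [] \<longrightarrow> src L (snd (last z)) = v)
    \<Longrightarrow> \<exists>g\<in>Mor G. src G g = F v \<and> rng G g = F (if z = [] then v else src L (fst (hd z))) \<and>
       (\<forall>y d. y \<in> Mor L \<longrightarrow> rng L y = v \<longrightarrow> zz_fold L z y = Some d \<longrightarrow>
          d \<in> Mor L \<and> rng L d = (if z = [] then v else src L (fst (hd z))) \<and> F d = cmp G g (F y))"
proof (induction z)
  case Nil
  have CL: "is_category L" using L unfolding is_LCSC_def by blast
  have CG: "is_category G" using G unfolding is_groupoid_def by blast
  have FM: "\<And>a. a \<in> Mor L \<Longrightarrow> F a \<in> Mor G" using Fi unfolding injective_functor_def by blast
  have Fs: "\<And>a. a \<in> Mor L \<Longrightarrow> src G (F a) = F (src L a) \<and> rng G (F a) = F (rng L a)"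
    using Fi unfolding injective_functor_def by blast
  have rv: "rng L v = v" using Nil.prems cat_rng_src[OF CL, of v] by simp
  show ?case
  proof (intro bexI[of _ "F v"] conjI allI impI)
    show "F v \<in> Mor G" using FM Nil.prems by blast
    show "src G (F v) = F v" using Fs Nil.prems by simp
    show "rng G (F v) = F (if [] = [] then v else src L (fst (hd [])))" using Fs Nil.prems rv by simp
    fix y d assume y: "y \<in> Mor L" "rng L y = v" "zz_fold L [] y = Some d"
    then show "d \<in> Mor L" "rng L d = (if [] = [] then v else src L (fst (hd [])))" by auto
    have "F d = F y" using y by simp
    also have "\<dots> = cmp G (rng G (F y)) (F y)" using cat_lid[OF CG FM[OF y(1)]] by simp
    also have "\<dots> = cmp G (F v) (F y)" using Fs y by simp
    finally show "F d = cmp G (F v) (F y)" .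
  qed
next
  case (Cons p rest)
  obtain a b where p: "p = (a, b)" by (cases p)
  have CL: "is_category L" using L unfolding is_LCSC_def by blast
  have CG: "is_category G" using G unfolding is_groupoid_def by blast
  have FM: "\<And>a. a \<in> Mor L \<Longrightarrow> F a \<in> Mor G" using Fi unfolding injective_functor_def by blast
  have Fs: "\<And>a. a \<in> Mor L \<Longrightarrow> src G (F a) = F (src L a) \<and> rng G (F a) = F (rng L a)"
    using Fi unfolding injective_functor_def by blast
  have Fc: "\<And>a b. a \<in> Mor L \<Longrightarrow> b \<in> Mor L \<Longrightarrow> src L a = rng L b \<Longrightarrow> F (cmp L a b) = cmp G (F a) (F b)"
    using Fi unfolding injective_functor_def by blast
  have ab: "a \<in> Mor L" "b \<in> Mor L" "rng L a = rng L b" using Cons.prems p by auto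
  have lk: "zz_links L rest" "rest \<noteq> [] \<longrightarrow> src L (fst (hd rest)) = src L b"
    using links_cons[of L p rest] Cons.prems p by auto
  have lst: "rest \<noteq> [] \<longrightarrow> src L (snd (last rest)) = v" using Cons.prems by auto
  have tgt: "(if rest = [] then v else src L (fst (hd rest))) = src L b"
    using lk Cons.prems p by auto
  obtain g' where g': "g' \<in> Mor G" "src G g' = F v" "rng G g' = F (src L b)"
    and g'y: "\<And>y d. y \<in> Mor L \<Longrightarrow> rng L y = v \<Longrightarrow> zz_fold L rest y = Some d \<Longrightarrow>
          d \<in> Mor L \<and> rng L d = src L b \<and> F d = cmp G g' (F y)"
    using Cons.IH[OF Cons.prems(1,2) _ lk(1) lst] Cons.prems(3) tgt by auto
  have Fa: "F a \<in> Mor G" and Fb: "F b \<in> Mor G" using FM ab by auto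
  obtain h where h: "h \<in> Mor G" "src G h = rng G (F a)" "rng G h = src G (F a)"
    "cmp G (F a) h = rng G (F a)" "cmp G h (F a) = src G (F a)" using grp_inv[OF G Fa] by blast
  define k where "k = cmp G (F b) g'"
  have sFb: "src G (F b) = rng G g'" using Fs ab g' by simp
  have k: "k \<in> Mor G" "src G k = F v" "rng G k = src G h"
    using cat_cmp_mor[OF CG Fb g'(1) sFb] cat_src_cmp[OF CG Fb g'(1) sFb]
      cat_rng_cmp[OF CG Fb g'(1) sFb] g' h Fs ab unfolding k_def by auto
  define g where "g = cmp G h k"
  have shk: "src G h = rng G k" using k by simp
  have g: "g \<in> Mor G" "src G g = F v" "rng G g = F (src L a)"
    using cat_cmp_mor[OF CG h(1) k(1) shk] cat_src_cmp[OF CG h(1) k(1) shk]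
      cat_rng_cmp[OF CG h(1) k(1) shk] k h Fs ab unfolding g_def by auto
  show ?case
  proof (intro bexI[of _ g] conjI allI impI)
    show "g \<in> Mor G" "src G g = F v" using g by auto
    show "rng G g = F (if p # rest = [] then v else src L (fst (hd (p # rest))))" using g p by simp
    fix y d assume y: "y \<in> Mor L" "rng L y = v" "zz_fold L (p # rest) y = Some d"
    obtain y1 where y1f: "zz_fold L rest y = Some y1" and st: "zz_step L a b y1 = Some d"
      using y(3) p by (auto split: option.splits)
    have y1: "y1 \<in> Mor L" "rng L y1 = src L b" "F y1 = cmp G g' (F y)" using g'y[OF y(1,2) y1f] by auto
    have d: "d \<in> Mor L" "rng L d = src L a" "cmp L a d = cmp L b y1"
      using step_lemma[OF L ab(1,2) y1(1) ab(3)] y1 st by auto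
    show "d \<in> Mor L" using d by simp
    show "rng L d = (if p # rest = [] then v else src L (fst (hd (p # rest))))" using d p by simp
    have Fy: "F y \<in> Mor G" "rng G (F y) = F v" using FM y Fs by auto
    have Fd: "F d \<in> Mor G" "rng G (F d) = F (src L a)" using FM d Fs by auto
    have "cmp G g (F y) = cmp G h (cmp G k (F y))"
      unfolding g_def using cat_assoc[OF CG h(1) k(1) Fy(1) shk] k Fy by simp
    also have "cmp G k (F y) = cmp G (F b) (cmp G g' (F y))"
      unfolding k_def using cat_assoc[OF CG Fb g'(1) Fy(1) sFb] g' Fy by simp
    also have "\<dots> = cmp G (F b) (F y1)" using y1 by simp
    also have "\<dots> = F (cmp L b y1)" using Fc[OF ab(2) y1(1)] y1 by simp
    also have "\<dots> = F (cmp L a d)" using d by simp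
    also have "\<dots> = cmp G (F a) (F d)" using Fc[OF ab(1) d(1)] d by simp
    also have "cmp G h (cmp G (F a) (F d)) = cmp G (cmp G h (F a)) (F d)"
      using cat_assoc[OF CG h(1) Fa Fd(1)] h Fd Fs ab by simp
    also have "\<dots> = cmp G (rng G (F d)) (F d)" using h Fd Fs ab by simp
    also have "\<dots> = F d" using cat_lid[OF CG Fd(1)] .
    finally show "F d = cmp G g (F y)" by simp
  qed
qed

section \<open>Rings and ultrafilters\<close>

lemma gr_base: "E \<in> D \<Longrightarrow> E \<in> gen_ring D"
  unfolding gen_ring_def by blast

lemma gr_diff: "E \<in> gen_ring D \<Longrightarrow> F \<in> gen_ring D \<Longrightarrow> E - F \<in> gen_ring D"
  unfolding gen_ring_def by blast

lemma gr_int: "E \<in> gen_ring D \<Longrightarrow> F \<in> gen_ring D \<Longrightarrow> E \<inter> F \<in> gen_ring D"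
proof -
  assume a: "E \<in> gen_ring D" "F \<in> gen_ring D"
  have "E \<inter> F = E - (E - F)" by blast
  then show ?thesis using gr_diff[OF a(1) gr_diff[OF a]] by simp
qed

lemma uf_filt: "is_ultrafilter_of R U \<Longrightarrow> is_filter_of R U"
  unfolding is_ultrafilter_of_def by simp

lemma filt_parts: "is_filter_of R U \<Longrightarrow> U \<subseteq> R \<and> {} \<notin> U \<and> (\<forall>E\<in>U. \<forall>F\<in>R. E \<subseteq> F \<longrightarrow> F \<in> U) \<and> (\<forall>E\<in>U. \<forall>F\<in>U. E \<inter> F \<in> U)"
  unfolding is_filter_of_def by simp

lemma uf_int: "is_ultrafilter_of R U \<Longrightarrow> E \<in> U \<Longrightarrow> F \<in> U \<Longrightarrow> E \<inter> F \<in> U"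
  using filt_parts[OF uf_filt, of R U] by blast

lemma uf_up: "is_ultrafilter_of R U \<Longrightarrow> E \<in> U \<Longrightarrow> F \<in> R \<Longrightarrow> E \<subseteq> F \<Longrightarrow> F \<in> U"
  using filt_parts[OF uf_filt, of R U] by blast

lemma uf_empty: "is_ultrafilter_of R U \<Longrightarrow> {} \<notin> U"
  using filt_parts[OF uf_filt, of R U] by blast

lemma uf_sub: "is_ultrafilter_of R U \<Longrightarrow> U \<subseteq> R"
  using filt_parts[OF uf_filt, of R U] by blast

lemma uf_sep:
  assumes R: "\<And>E F. E \<in> R \<Longrightarrow> F \<in> R \<Longrightarrow> E \<inter> F \<in> R"
    and u: "is_ultrafilter_of R U" and u': "is_ultrafilter_of R U'" and ne: "U \<noteq> U'"
  shows "\<exists>E\<in>U. \<exists>E'\<in>U'. E \<inter> E' = {}"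
proof (rule ccontr)
  assume nt: "\<not> ?thesis"
  have "\<not> U \<subseteq> U'"
  proof
    assume "U \<subseteq> U'"
    then have "U' = U" using u u' unfolding is_ultrafilter_of_def by blast
    then show False using ne by simp
  qed
  then obtain E where E: "E \<in> U" "E \<notin> U'" by blast
  have ER: "E \<in> R" using E u uf_sub by blast
  have U'R: "U' \<subseteq> R" using u' uf_sub by blast
  have nd: "\<And>F. F \<in> U' \<Longrightarrow> E \<inter> F \<noteq> {}" using nt E by blast
  define W where "W = {H \<in> R. \<exists>F\<in>U'. E \<inter> F \<subseteq> H}"
  have fU': "is_filter_of R U'" using u' unfolding is_ultrafilter_of_def by blast
  have "is_filter_of R W"
    unfolding is_filter_of_def
  proof (intro conjI ballI impI)
    show "W \<subseteq> R" unfolding W_def by blast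
    obtain F0 where "F0 \<in> U'" using fU' unfolding is_filter_of_def by auto
    then have "E \<inter> F0 \<in> W" unfolding W_def using R ER U'R by blast
    then show "W \<noteq> {}" by blast
    show "{} \<notin> W" unfolding W_def using nd by blast
    fix H1 H2 assume "H1 \<in> W" "H2 \<in> R" "H1 \<subseteq> H2"
    then show "H2 \<in> W" unfolding W_def by blast
  next
    fix H1 H2 assume h: "H1 \<in> W" "H2 \<in> W"
    then obtain F1 F2 where f: "F1 \<in> U'" "F2 \<in> U'" "E \<inter> F1 \<subseteq> H1" "E \<inter> F2 \<subseteq> H2"
      "H1 \<in> R" "H2 \<in> R" unfolding W_def by blast
    have "F1 \<inter> F2 \<in> U'" using uf_int[OF u' f(1,2)] .
    moreover have "E \<inter> (F1 \<inter> F2) \<subseteq> H1 \<inter> H2" using f by blast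
    moreover have "H1 \<inter> H2 \<in> R" using R f by blast
    ultimately show "H1 \<inter> H2 \<in> W" unfolding W_def by blast
  qed
  moreover have "U' \<subseteq> W" unfolding W_def using U'R by blast
  ultimately have "W = U'" using u' unfolding is_ultrafilter_of_def by blast
  moreover obtain F0 where "F0 \<in> U'" using fU' unfolding is_filter_of_def by auto
  then have "E \<in> W" unfolding W_def using ER by blast
  ultimately show False using E by simp
qed

section \<open>Zigzag facts\<close>

lemma Xsp_uf: "y \<in> Xsp L \<Longrightarrow> is_ultrafilter_of (Av L (fst y)) (snd y)"
  unfolding Xsp_def by auto

lemma Av_int: "E \<in> Av L v \<Longrightarrow> F \<in> Av L v \<Longrightarrow> E \<inter> F \<in> Av L v"
  unfolding Av_def by (rule gr_int)

lemma dom_Av: "is_zigzag L z \<Longrightarrow> zz_dom L z \<noteq> {} \<Longrightarrow> zz_dom L z \<in> Av L (zz_s L z)"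
  unfolding Av_def D0_def by (rule gr_base) blast

lemma basic_ZX:
  assumes z: "is_zigzag L z" and x: "x \<in> hat L (zz_s L z) E" and E: "E \<subseteq> zz_dom L z"
  shows "(z, x) \<in> ZX L"
proof -
  have xs: "x \<in> Xsp L" "fst x = zz_s L z" "E \<in> snd x" using x unfolding hat_def by auto
  have u: "is_ultrafilter_of (Av L (zz_s L z)) (snd x)" using Xsp_uf[OF xs(1)] xs by simp
  have "E \<noteq> {}" using uf_empty[OF u] xs by auto
  then have "zz_dom L z \<in> Av L (zz_s L z)" using dom_Av[OF z] E by blast
  then have "zz_dom L z \<in> snd x" using uf_up[OF u xs(3)] E by blast
  then show ?thesis unfolding ZX_def using z xs by auto
qed

lemma ZX_dom: "(z, x) \<in> ZX L \<Longrightarrow> is_zigzag L z \<and> x \<in> Xsp L \<and> fst x = zz_s L z \<and> zz_dom L z \<in> snd x"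
  unfolding ZX_def by auto

lemma class_mem: "(z, x) \<in> ZX L \<Longrightarrow> (z, x) \<in> G2_class L z x"
  unfolding G2_class_def sim2_def using ZX_dom[of z x L] by blast

lemma sim2_trans:
  assumes "((z1, x), (z2, x)) \<in> sim2 L" "((z2, x), (z3, x)) \<in> sim2 L"
  shows "((z1, x), (z3, x)) \<in> sim2 L"
proof -
  obtain E1 E2 where e: "E1 \<in> snd x" "E2 \<in> snd x" "\<forall>y\<in>E1. zz_map L z1 y = zz_map L z2 y"
    "\<forall>y\<in>E2. zz_map L z2 y = zz_map L z3 y" and zx: "(z1,x) \<in> ZX L" "(z3,x) \<in> ZX L"
    using assms unfolding sim2_def by auto
  have u: "is_ultrafilter_of (Av L (fst x)) (snd x)" using Xsp_uf ZX_dom[OF zx(1)] by blast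
  have "E1 \<inter> E2 \<in> snd x" using uf_int[OF u e(1,2)] .
  moreover have "\<forall>y\<in>E1 \<inter> E2. zz_map L z1 y = zz_map L z3 y" using e by auto
  ultimately show ?thesis unfolding sim2_def using zx by blast
qed

lemma sim2_sym: "((z1, x), (z2, x')) \<in> sim2 L \<Longrightarrow> ((z2, x'), (z1, x)) \<in> sim2 L"
  unfolding sim2_def by (auto, metis)

lemma sim2_same: "((a, x), (b, x')) \<in> sim2 L \<Longrightarrow> x' = x"
  unfolding sim2_def by auto

lemma class_eq:
  assumes "((z, x), (z', x)) \<in> sim2 L"
  shows "G2_class L z x = G2_class L z' x"
proof -
  have "\<And>q. (((z, x), q) \<in> sim2 L) = (((z', x), q) \<in> sim2 L)"
  proof -
    fix q :: "('a \<times> 'a) list \<times> 'a \<times> 'a set set"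
    obtain w y where q: "q = (w, y)" by (cases q)
    show "(((z, x), q) \<in> sim2 L) = (((z', x), q) \<in> sim2 L)"
      unfolding q using assms sim2_trans sim2_sym sim2_same by metis
  qed
  then show ?thesis unfolding G2_class_def by auto
qed

lemma key_agree:
  assumes L: "is_LCSC L" and G: "is_groupoid G" and Fi: "injective_functor L G F"
    and z: "is_zigzag L z" and z': "is_zigzag L z'" and s: "zz_s L z = zz_s L z'"
    and w: "w \<in> zz_dom L z" "w \<in> zz_dom L z'" and e: "zz_map L z w = zz_map L z' w"
    and y: "y \<in> zz_dom L z" "y \<in> zz_dom L z'"
  shows "zz_map L z y = zz_map L z' y"
proof -
  have CL: "is_category L" using L unfolding is_LCSC_def by blast
  define v where "v = zz_s L z"
  have zne: "z \<noteq> []" "z' \<noteq> []" using z z' unfolding is_zigzag_def by auto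
  have lz: "last z \<in> set z" using zne by simp
  have sbm: "snd (last z) \<in> Mor L" using z lz unfolding is_zigzag_def by fastforce
  have vM: "v \<in> Mor L" "src L v = v"
    unfolding v_def zz_s_def using cat_src_mor[OF CL sbm] cat_src_src[OF CL sbm] by auto
  have zc: "\<forall>(a,b)\<in>set z. a\<in>Mor L \<and> b \<in> Mor L \<and> rng L a = rng L b" "zz_links L z"
    using z unfolding is_zigzag_def by auto
  have zc': "\<forall>(a,b)\<in>set z'. a\<in>Mor L \<and> b \<in> Mor L \<and> rng L a = rng L b" "zz_links L z'"
    using z' unfolding is_zigzag_def by auto
  have l1: "z \<noteq> [] \<longrightarrow> src L (snd (last z)) = v" by (simp add: v_def zz_s_def)
  have l2: "z' \<noteq> [] \<longrightarrow> src L (snd (last z')) = v" using s by (simp add: v_def zz_s_def)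
  obtain g where g: "g \<in> Mor G" "src G g = F v"
    and gy0: "\<forall>y d. y \<in> Mor L \<longrightarrow> rng L y = v \<longrightarrow> zz_fold L z y = Some d \<longrightarrow>
          d \<in> Mor L \<and> rng L d = (if z = [] then v else src L (fst (hd z))) \<and> F d = cmp G g (F y)"
    using zz_fold_grp[OF L G Fi vM zc l1] by blast
  obtain g' where g': "g' \<in> Mor G" "src G g' = F v"
    and gy0': "\<forall>y d. y \<in> Mor L \<longrightarrow> rng L y = v \<longrightarrow> zz_fold L z' y = Some d \<longrightarrow>
          d \<in> Mor L \<and> rng L d = (if z' = [] then v else src L (fst (hd z'))) \<and> F d = cmp G g' (F y)"
    using zz_fold_grp[OF L G Fi vM zc' l2] by blast
  have gy: "\<And>y d. y \<in> Mor L \<Longrightarrow> rng L y = v \<Longrightarrow> zz_fold L z y = Some d \<Longrightarrow>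
          d \<in> Mor L \<and> F d = cmp G g (F y)" using gy0 by blast
  have gy': "\<And>y d. y \<in> Mor L \<Longrightarrow> rng L y = v \<Longrightarrow> zz_fold L z' y = Some d \<Longrightarrow>
          d \<in> Mor L \<and> F d = cmp G g' (F y)" using gy0' by blast
  have FM: "\<And>a. a \<in> Mor L \<Longrightarrow> F a \<in> Mor G" using Fi unfolding injective_functor_def by blast
  have Fs: "\<And>a. a \<in> Mor L \<Longrightarrow> rng G (F a) = F (rng L a)"
    using Fi unfolding injective_functor_def by blast
  have inj: "inj_on F (Mor L)" using Fi unfolding injective_functor_def by blast
  have dd: "\<And>u. u \<in> zz_dom L z \<Longrightarrow> u \<in> zz_dom L z' \<Longrightarrow>
      u \<in> Mor L \<and> rng L u = v \<and> (\<exists>d d'. zz_map L z u = Some d \<and> zz_map L z' u = Some d'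
         \<and> zz_fold L z u = Some d \<and> zz_fold L z' u = Some d')"
    unfolding zz_dom_def zz_map_def vMor_def v_def using s by (auto split: if_splits)
  obtain d d' where wd: "w \<in> Mor L" "rng L w = v" "zz_map L z w = Some d" "zz_map L z' w = Some d'"
    "zz_fold L z w = Some d" "zz_fold L z' w = Some d'" using dd[OF w] by blast
  have "d = d'" using e wd by simp
  moreover have "F d = cmp G g (F w)" using gy[OF wd(1,2,5)] by simp
  moreover have "F d' = cmp G g' (F w)" using gy'[OF wd(1,2,6)] by simp
  ultimately have "cmp G g (F w) = cmp G g' (F w)" by simp
  then have gg: "g = g'"
    using grp_rcancel[OF G g(1) g'(1) FM[OF wd(1)]] g g' Fs wd by simp
  obtain c c' where yd: "y \<in> Mor L" "rng L y = v" "zz_map L z y = Some c" "zz_map L z' y = Some c'"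
    "zz_fold L z y = Some c" "zz_fold L z' y = Some c'" using dd[OF y] by blast
  have "c \<in> Mor L" "c' \<in> Mor L" "F c = F c'" using gy[OF yd(1,2,5)] gy'[OF yd(1,2,6)] gg by auto
  then have "c = c'" using inj unfolding inj_on_def by blast
  then show ?thesis using yd by simp
qed

lemma nbhd:
  assumes zx: "(z, x) \<in> ZX L" and E: "E \<in> Av L (zz_s L z)" "E \<subseteq> zz_dom L z" "E \<in> snd x"
  shows "openin (G2_topology L) (G2_basic L z E) \<and> G2_class L z x \<in> G2_basic L z E"
proof
  have zz: "is_zigzag L z" using ZX_dom[OF zx] by simp
  have "G2_basic L z E \<in> G2_basis L" unfolding G2_basis_def mem_Collect_eq
    by (intro exI[of _ z] exI[of _ E]) (simp add: zz E(1,2))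
  then show "openin (G2_topology L) (G2_basic L z E)"
    unfolding G2_topology_def by (rule topology_generated_by_Basis)
  have "x \<in> hat L (zz_s L z) E" unfolding hat_def using ZX_dom[OF zx] E(3) by simp
  then show "G2_class L z x \<in> G2_basic L z E" unfolding G2_basic_def mem_Collect_eq by blast
qed

lemma common:
  assumes c: "c \<in> G2_basic L z E" "c \<in> G2_basic L z' E'"
    and z: "is_zigzag L z" "E \<subseteq> zz_dom L z"
  shows "\<exists>y. y \<in> hat L (zz_s L z) E \<and> y \<in> hat L (zz_s L z') E' \<and> ((z', y), (z, y)) \<in> sim2 L"
proof -
  obtain y where y: "c = G2_class L z y" "y \<in> hat L (zz_s L z) E" using c(1) unfolding G2_basic_def by blast
  obtain y' where y': "c = G2_class L z' y'" "y' \<in> hat L (zz_s L z') E'" using c(2) unfolding G2_basic_def by blast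
  have "(z, y) \<in> ZX L" using basic_ZX[OF z(1) y(2) z(2)] .
  then have "(z, y) \<in> c" using class_mem[of z y L] y(1) by simp
  then have "(z, y) \<in> G2_class L z' y'" using y'(1) by simp
  then have s: "((z', y'), (z, y)) \<in> sim2 L" unfolding G2_class_def by simp
  then have "y = y'" by (rule sim2_same)
  then show ?thesis using y(2) y'(2) s by blast
qed

lemma finish:
  assumes "openin X U \<and> p \<in> U" "openin X V \<and> q \<in> V" "disjnt U V"
  shows "\<exists>U V. openin X U \<and> openin X V \<and> p \<in> U \<and> q \<in> V \<and> disjnt U V"
  using assms by blast

theorem mainTheorem7:
  fixes L :: "'a cat" and G :: "'b cat" and F :: "'a \<Rightarrow> 'b"
  assumes "is_LCSC L"
    and "is_groupoid G"
    and "injective_functor L G F"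
  shows "Hausdorff_space (G2_topology L)"
  unfolding Hausdorff_space_def
proof (intro allI impI)
  fix p q assume pq: "p \<in> topspace (G2_topology L) \<and> q \<in> topspace (G2_topology L) \<and> p \<noteq> q"
  have pt: "\<And>p. p \<in> topspace (G2_topology L) \<Longrightarrow> \<exists>z x. p = G2_class L z x \<and> (z, x) \<in> ZX L"
  proof -
    fix p assume "p \<in> topspace (G2_topology L)"
    then obtain B where B: "B \<in> G2_basis L" "p \<in> B"
      unfolding G2_topology_def topology_generated_by_topspace by blast
    then obtain z E where zE: "is_zigzag L z" "E \<subseteq> zz_dom L z" "B = G2_basic L z E"
      unfolding G2_basis_def by blast
    then obtain x where "x \<in> hat L (zz_s L z) E" "p = G2_class L z x"
      using B unfolding G2_basic_def by blast
    then show "\<exists>z x. p = G2_class L z x \<and> (z, x) \<in> ZX L" using basic_ZX[OF zE(1) _ zE(2)] by blast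
  qed
  obtain z x where p: "p = G2_class L z x" "(z, x) \<in> ZX L" using pt pq by blast
  obtain z' x' where q: "q = G2_class L z' x'" "(z', x') \<in> ZX L" using pt pq by blast
  note zx = ZX_dom[OF p(2)] and zx' = ZX_dom[OF q(2)]
  have ux: "is_ultrafilter_of (Av L (zz_s L z)) (snd x)" using Xsp_uf[of x L] zx by simp
  have ux': "is_ultrafilter_of (Av L (zz_s L z')) (snd x')" using Xsp_uf[of x' L] zx' by simp
  have dA: "zz_dom L z \<in> Av L (zz_s L z)" using dom_Av[of L z] zx uf_empty[OF ux] by force
  have dA': "zz_dom L z' \<in> Av L (zz_s L z')" using dom_Av[of L z'] zx' uf_empty[OF ux'] by force
  show "\<exists>U V. openin (G2_topology L) U \<and> openin (G2_topology L) V \<and> p \<in> U \<and> q \<in> V \<and> disjnt U V"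
  proof (cases "x = x'")
    case False
    show ?thesis
    proof (cases "fst x = fst x'")
      case False
      have d: "disjnt (G2_basic L z (zz_dom L z)) (G2_basic L z' (zz_dom L z'))"
        unfolding disjnt_def
      proof (rule ccontr)
        assume "G2_basic L z (zz_dom L z) \<inter> G2_basic L z' (zz_dom L z') \<noteq> {}"
        then obtain c where c: "c \<in> G2_basic L z (zz_dom L z)" "c \<in> G2_basic L z' (zz_dom L z')" by blast
        obtain y where "y \<in> hat L (zz_s L z) (zz_dom L z)" "y \<in> hat L (zz_s L z') (zz_dom L z')"
          using common[OF c zx[THEN conjunct1] order_refl] by blast
        then show False using False zx zx' unfolding hat_def by auto
      qed
      show ?thesis unfolding p(1) q(1)
        by (rule finish[OF nbhd[OF p(2) dA order_refl zx[THEN conjunct2, THEN conjunct2, THEN conjunct2]]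
          nbhd[OF q(2) dA' order_refl zx'[THEN conjunct2, THEN conjunct2, THEN conjunct2]] d])
    next
      case True
      have vv: "zz_s L z' = zz_s L z" using True zx zx' by simp
      have ne: "snd x \<noteq> snd x'" using True \<open>x \<noteq> x'\<close> by (simp add: prod_eq_iff)
      have ux'': "is_ultrafilter_of (Av L (zz_s L z)) (snd x')" using ux' vv by simp
      obtain E0 E0' where e0: "E0 \<in> snd x" "E0' \<in> snd x'" "E0 \<inter> E0' = {}"
        using uf_sep[OF Av_int ux ux'' ne] by blast
      define E where "E = E0 \<inter> zz_dom L z"
      define E' where "E' = E0' \<inter> zz_dom L z'"
      have EA: "E \<in> Av L (zz_s L z)" "E \<in> snd x" "E \<subseteq> zz_dom L z"
        unfolding E_def using Av_int[OF subsetD[OF uf_sub[OF ux] e0(1)] dA]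
          uf_int[OF ux e0(1) zx[THEN conjunct2, THEN conjunct2, THEN conjunct2]] by auto
      have EA': "E' \<in> Av L (zz_s L z')" "E' \<in> snd x'" "E' \<subseteq> zz_dom L z'"
        unfolding E'_def using Av_int[OF subsetD[OF uf_sub[OF ux'] e0(2)] dA']
          uf_int[OF ux' e0(2) zx'[THEN conjunct2, THEN conjunct2, THEN conjunct2]] by auto
      have d: "disjnt (G2_basic L z E) (G2_basic L z' E')"
        unfolding disjnt_def
      proof (rule ccontr)
        assume "G2_basic L z E \<inter> G2_basic L z' E' \<noteq> {}"
        then obtain c where c: "c \<in> G2_basic L z E" "c \<in> G2_basic L z' E'" by blast
        obtain y where y: "y \<in> hat L (zz_s L z) E" "y \<in> hat L (zz_s L z') E'"
          using common[OF c zx[THEN conjunct1] EA(3)] by blast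
        then have "y \<in> Xsp L" "E \<in> snd y" "E' \<in> snd y" unfolding hat_def by auto
        then have "E \<inter> E' \<in> snd y" using uf_int[OF Xsp_uf[of y L]] by blast
        moreover have "E \<inter> E' = {}" using e0 unfolding E_def E'_def by blast
        ultimately show False using uf_empty[OF Xsp_uf[of y L]] \<open>y \<in> Xsp L\<close> by simp
      qed
      show ?thesis unfolding p(1) q(1)
        by (rule finish[OF nbhd[OF p(2) EA(1,3,2)] nbhd[OF q(2) EA'(1,3,2)] d])
    qed
  next
    case True
    have vv: "zz_s L z' = zz_s L z" using True zx zx' by simp
    define E where "E = zz_dom L z \<inter> zz_dom L z'"
    have EA: "E \<in> Av L (zz_s L z)" "E \<in> snd x" "E \<subseteq> zz_dom L z"
      unfolding E_def using Av_int[OF dA] dA' vv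
        uf_int[OF ux zx[THEN conjunct2, THEN conjunct2, THEN conjunct2]]
        zx'[THEN conjunct2, THEN conjunct2, THEN conjunct2] True by auto
    have EA': "E \<in> Av L (zz_s L z')" "E \<in> snd x'" "E \<subseteq> zz_dom L z'"
      using EA vv True unfolding E_def by auto
    have d: "disjnt (G2_basic L z E) (G2_basic L z' E)"
      unfolding disjnt_def
    proof (rule ccontr)
      assume "G2_basic L z E \<inter> G2_basic L z' E \<noteq> {}"
      then obtain c where c: "c \<in> G2_basic L z E" "c \<in> G2_basic L z' E" by blast
      obtain y where y: "y \<in> hat L (zz_s L z) E" "((z', y), (z, y)) \<in> sim2 L"
        using common[OF c zx[THEN conjunct1] EA(3)] by blast
      obtain E1 where E1: "E1 \<in> snd y" "\<forall>u\<in>E1. zz_map L z' u = zz_map L z u"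
        using y(2) unfolding sim2_def by auto
      have ys: "y \<in> Xsp L" "E \<in> snd y" using y unfolding hat_def by auto
      have "E1 \<inter> E \<in> snd y" using uf_int[OF Xsp_uf[of y L]] ys E1 by blast
      then have "E1 \<inter> E \<noteq> {}" using uf_empty[OF Xsp_uf[of y L]] ys by force
      then obtain w where w: "w \<in> E1" "w \<in> E" by blast
      have agree: "\<forall>u\<in>E. zz_map L z u = zz_map L z' u"
      proof
        fix u assume u: "u \<in> E"
        have wd: "w \<in> zz_dom L z" "w \<in> zz_dom L z'" using w unfolding E_def by auto
        have ud: "u \<in> zz_dom L z" "u \<in> zz_dom L z'" using u unfolding E_def by auto
        have we: "zz_map L z w = zz_map L z' w" using E1(2) w(1) by simp
        show "zz_map L z u = zz_map L z' u"
          by (rule key_agree[OF assms zx[THEN conjunct1] zx'[THEN conjunct1] vv[symmetric] wd we ud])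
      qed
      have "((z, x), (z', x)) \<in> sim2 L"
        unfolding sim2_def using p(2) q(2) True EA(2) agree by blast
      then have "p = q" using class_eq[of z x z' L] p q True by simp
      then show False using pq by simp
    qed
    show ?thesis unfolding p(1) q(1)
      by (rule finish[OF nbhd[OF p(2) EA(1,3,2)] nbhd[OF q(2) EA'(1,3,2)] d])
  qed
qed

end
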